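(* Let $M \ge 1$ and $K \ge 1$ be integers, and for each document $j \in \{1,\dots,M\}$ and topic $i \in \{1,\dots,K\}$ let $n_{j\cdot}^i \in \{0,1,2,\dots\}$ be fixed, with $N_j = \sum_{i=1}^K n_{j\cdot}^i$. Let $K_{j+} = |\{ i : n_{j\cdot}^i > 0\}|$. For $\alpha > 0$ define \[ p(\mathbf{Z} \mid \alpha) = \prod_{j=1}^M \frac{\Gamma(\alpha K)}{\Gamma\big(\sum_{i=1}^K n_{j\cdot}^i + \alpha K\big)} \prod_{i=1}^K \frac{\Gamma(n_{j\cdot}^i + \alpha)}{\Gamma(\alpha)}. \] Fix $\lambda > 0$ and set $\alpha = \exp(-\lambda \eta)$. Then, as $\eta \to \infty$, \[ -\log p(\mathbf{Z} \mid \alpha) \sim \eta \lambda \sum_{j=1}^M (K_{j+} - 1). \]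
   Context: Here $\mathbf{Z}$ denotes a fixed assignment of word tokens in $M$ documents to $K$ topics, and $n_{j\cdot}^i$ is the number of tokens in document $j$ assigned to topic $i$; $p(\mathbf{Z}\mid\alpha)$ is the Dirichlet-multinomial likelihood of these assignments under a symmetric Dirichlet$(\alpha)$ prior on per-document topic proportions. The notation $f(\eta) \sim g(\eta)$ means $f(\eta)/g(\eta) \to 1$ as $\eta \to \infty$. *)

theory Defs
  imports "HOL-Analysis.Analysis" "HOL-Library.Landau_Symbols"
begin

text \<open>Counts: n j i = number of tokens of document j (1..M) assigned to topic i (1..K).\<close>

definition doc_len :: "nat \<Rightarrow> (nat \<Rightarrow> nat \<Rightarrow> nat) \<Rightarrow> nat \<Rightarrow> nat" where
  "doc_len K n j = (\<Sum>i=1..K. n j i)"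

definition Kplus :: "nat \<Rightarrow> (nat \<Rightarrow> nat \<Rightarrow> nat) \<Rightarrow> nat \<Rightarrow> nat" where
  "Kplus K n j = card {i \<in> {1..K}. n j i > 0}"

definition lik :: "nat \<Rightarrow> nat \<Rightarrow> (nat \<Rightarrow> nat \<Rightarrow> nat) \<Rightarrow> real \<Rightarrow> real" where
  "lik M K n \<alpha> = (\<Prod>j=1..M. Gamma (\<alpha> * real K) / Gamma (real (doc_len K n j) + \<alpha> * real K)
        * (\<Prod>i=1..K. Gamma (real (n j i) + \<alpha>) / Gamma \<alpha>))"

end

theory Submission
  imports Defs "HOL-Real_Asymp.Real_Asymp"
begin

lemma pos_not_npi: "(x::real) > 0 \<Longrightarrow> x \<notin> \<int>\<^sub>\<le>\<^sub>0"
  using nonpos_Ints_nonpos by fastforce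

definition hj :: "nat \<Rightarrow> (nat \<Rightarrow> nat \<Rightarrow> nat) \<Rightarrow> nat \<Rightarrow> real \<Rightarrow> real" where
  "hj K n j a = Gamma (a * real K + 1) / (real K * Gamma (real (doc_len K n j) + a * real K))
     * (\<Prod>i\<in>{i\<in>{1..K}. n j i > 0}. Gamma (real (n j i) + a) / Gamma (a + 1))"

lemma term_eq:
  assumes a: "a > 0" and K: "K \<ge> 1" and kp: "Kplus K n j \<ge> 1"
  shows "Gamma (a * real K) / Gamma (real (doc_len K n j) + a * real K)
        * (\<Prod>i=1..K. Gamma (real (n j i) + a) / Gamma a) = a ^ (Kplus K n j - 1) * hj K n j a"
proof -
  define P where "P = {i\<in>{1..K}. n j i > 0}"
  have fin: "finite P" unfolding P_def by auto
  have sub: "P \<subseteq> {1..K}" unfolding P_def by auto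
  have ga: "Gamma a \<noteq> 0" using a by (metis Gamma_real_pos less_irrefl)
  have g1: "Gamma (a + 1) = a * Gamma a" using Gamma_plus1[OF pos_not_npi[OF a]] .
  have "(\<Prod>i=1..K. Gamma (real (n j i) + a) / Gamma a)
      = (\<Prod>i\<in>P. Gamma (real (n j i) + a) / Gamma a) * (\<Prod>i\<in>{1..K}-P. Gamma (real (n j i) + a) / Gamma a)"
    using prod.subset_diff[OF sub finite_atLeastAtMost, of "\<lambda>i. Gamma (real (n j i) + a) / Gamma a"] by (simp only: mult.commute)
  also have "(\<Prod>i\<in>{1..K}-P. Gamma (real (n j i) + a) / Gamma a) = 1"
    by (rule prod.neutral) (auto simp: P_def ga)
  also have "(\<Prod>i\<in>P. Gamma (real (n j i) + a) / Gamma a) = (\<Prod>i\<in>P. a * (Gamma (real (n j i) + a) / Gamma (a+1)))"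
    using a by (intro prod.cong) (auto simp: g1 ga)
  also have "\<dots> = a ^ card P * (\<Prod>i\<in>P. Gamma (real (n j i) + a) / Gamma (a+1))"
    by (simp only: prod.distrib prod_constant)
  finally have pr: "(\<Prod>i=1..K. Gamma (real (n j i) + a) / Gamma a) = a ^ card P * (\<Prod>i\<in>P. Gamma (real (n j i) + a) / Gamma (a+1))" by simp
  have aK: "a * real K > 0" using a K by auto
  have gK: "Gamma (a * real K) = Gamma (a * real K + 1) / (a * real K)"
    using Gamma_plus1[OF pos_not_npi[OF aK]] aK by simp
  have cp: "card P = Suc (Kplus K n j - 1)" using kp unfolding P_def Kplus_def by simp
  have hj: "hj K n j a = Gamma (a * real K + 1) / (real K * Gamma (real (doc_len K n j) + a * real K))
     * (\<Prod>i\<in>P. Gamma (real (n j i) + a) / Gamma (a + 1))" by (simp add: hj_def P_def)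
  have Kn: "real K \<noteq> 0" using K by simp
  have an: "a \<noteq> 0" using a by simp
  show ?thesis unfolding pr gK hj cp power_Suc using Kn an
    by (simp add: field_simps)
qed

lemma hj_pos:
  assumes a: "a \<ge> 0" and K: "K \<ge> 1" and d: "doc_len K n j \<ge> 1"
  shows "hj K n j a > 0"
proof -
  have "a * real K + 1 > 0" using a K by (simp add: add_nonneg_pos)
  moreover have "real (doc_len K n j) + a * real K > 0" using a K d by (simp add: add_pos_nonneg)
  moreover have "\<forall>i\<in>{i\<in>{1..K}. n j i > 0}. Gamma (real (n j i) + a) / Gamma (a + 1) > 0"
    using a by (auto intro!: divide_pos_pos Gamma_real_pos add_pos_nonneg)
  ultimately show ?thesis unfolding hj_def using K a
    by (auto intro!: mult_pos_pos divide_pos_pos prod_pos Gamma_real_pos)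
qed

lemma hj_cont:
  assumes K: "K \<ge> 1" and d: "doc_len K n j \<ge> 1"
  shows "isCont (hj K n j) 0"
proof -
  have d': "real (doc_len K n j) > 0" using d by simp
  have "isCont (\<lambda>a. Gamma (a * real K + 1) / (real K * Gamma (real (doc_len K n j) + a * real K))
     * (\<Prod>i\<in>{i\<in>{1..K}. n j i > 0}. Gamma (real (n j i) + a) / Gamma (a + 1))) 0"
    using K d' pos_not_npi[OF d'] by (auto intro!: continuous_intros pos_not_npi simp: Gamma_eq_zero_iff)
  then show ?thesis unfolding hj_def[abs_def] .
qed

lemma Kplus_ge1:
  assumes d: "doc_len K n j \<ge> 1"
  shows "Kplus K n j \<ge> 1"
proof -
  have "\<exists>i\<in>{1..K}. n j i > 0"
  proof (rule ccontr)
    assume "\<not> ?thesis"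
    then have "doc_len K n j = 0" unfolding doc_len_def by auto
    with d show False by simp
  qed
  then obtain i where "i \<in> {i\<in>{1..K}. n j i > 0}" by auto
  then have "{i\<in>{1..K}. n j i > 0} \<noteq> {}" by auto
  then show ?thesis unfolding Kplus_def by (simp add: Suc_le_eq card_gt_0_iff)
qed

theorem lemma1:
  fixes M K :: nat and n :: "nat \<Rightarrow> nat \<Rightarrow> nat" and lam :: real
  assumes "M \<ge> 1" and "K \<ge> 1" and "lam > 0"
    and nonempty_docs: "\<forall>j\<in>{1..M}. doc_len K n j \<ge> 1"
    and nondegenerate: "(\<Sum>j=1..M. real (Kplus K n j) - 1) > 0"
  shows "(\<lambda>\<eta>. - ln (lik M K n (exp (- lam * \<eta>))))
           \<sim>[at_top] (\<lambda>\<eta>. \<eta> * lam * (\<Sum>j=1..M. real (Kplus K n j) - 1))"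
proof -
  note K = \<open>K \<ge> 1\<close> and lam = \<open>lam > 0\<close>
  define S where "S = (\<Sum>j=1..M. Kplus K n j - 1)"
  define s where "s = (\<Sum>j=1..M. real (Kplus K n j) - 1)"
  define G where "G = (\<lambda>a. \<Prod>j=1..M. hj K n j a)"
  have kp: "\<And>j. j \<in> {1..M} \<Longrightarrow> Kplus K n j \<ge> 1" using nonempty_docs Kplus_ge1 by blast
  have sS: "real S = s" unfolding S_def s_def of_nat_sum
    by (rule sum.cong) (use kp in \<open>auto simp: of_nat_diff\<close>)
  have s: "s > 0" using nondegenerate s_def by simp
  have likG: "lik M K n a = a ^ S * G a" if a: "a > 0" for a
  proof -
    have "lik M K n a = (\<Prod>j=1..M. a ^ (Kplus K n j - 1) * hj K n j a)"
      unfolding lik_def by (rule prod.cong) (use a K kp term_eq in auto)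
    also have "\<dots> = a ^ S * G a" unfolding S_def G_def power_sum prod.distrib ..
    finally show ?thesis .
  qed
  have Gpos: "G a > 0" if "a \<ge> 0" for a
    unfolding G_def using that K nonempty_docs by (auto intro!: prod_pos hj_pos)
  have Gcont: "isCont G 0"
    unfolding G_def using K nonempty_docs by (auto intro!: continuous_intros hj_cont)
  define al where "al = (\<lambda>\<eta>::real. exp (- lam * \<eta>))"
  have al0: "(al \<longlongrightarrow> 0) at_top" unfolding al_def using lam by real_asymp
  have LG: "((\<lambda>\<eta>. ln (G (al \<eta>))) \<longlongrightarrow> ln (G 0)) at_top"
    by (intro tendsto_ln isCont_tendsto_compose[OF Gcont al0]) (use Gpos in force)
  have eq: "- ln (lik M K n (al \<eta>)) = lam * \<eta> * s - ln (G (al \<eta>))" for \<eta>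
  proof -
    have ap: "al \<eta> > 0" unfolding al_def by simp
    have "lik M K n (al \<eta>) = al \<eta> ^ S * G (al \<eta>)" using likG[OF ap] .
    moreover have "ln (al \<eta> ^ S * G (al \<eta>)) = real S * ln (al \<eta>) + ln (G (al \<eta>))"
      using ap Gpos[of "al \<eta>"] by (simp add: ln_mult ln_realpow)
    ultimately show ?thesis unfolding sS al_def by simp
  qed
  have lim: "((\<lambda>\<eta>. (lam * \<eta> * s - ln (G (al \<eta>))) / (\<eta> * lam * s)) \<longlongrightarrow> 1) at_top"
  proof -
    have "((\<lambda>\<eta>. 1 - ln (G (al \<eta>)) * inverse \<eta> / (lam * s)) \<longlongrightarrow> 1 - ln (G 0) * 0 / (lam * s)) at_top"
      by (intro tendsto_intros LG tendsto_inverse_0_at_top filterlim_ident) (use lam s in simp)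
    then have "((\<lambda>\<eta>. 1 - ln (G (al \<eta>)) * inverse \<eta> / (lam * s)) \<longlongrightarrow> 1) at_top" by simp
    then show ?thesis
    proof (rule Lim_transform_eventually)
      show "\<forall>\<^sub>F \<eta> in at_top. 1 - ln (G (al \<eta>)) * inverse \<eta> / (lam * s) = (lam * \<eta> * s - ln (G (al \<eta>))) / (\<eta> * lam * s)"
        using eventually_gt_at_top[of 0] by eventually_elim (use lam s in \<open>auto simp: field_simps\<close>)
    qed
  qed
  have fe: "(\<lambda>\<eta>. - ln (lik M K n (exp (- lam * \<eta>)))) = (\<lambda>\<eta>. lam * \<eta> * s - ln (G (al \<eta>)))"
    using eq unfolding al_def by auto
  show ?thesis unfolding fe s_def[symmetric] using lim by (rule asymp_equivI')
qed

end
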